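(* Let $(X,d)$ be a complete metric space, $N\in\mathbb{N}\setminus\{0\}$, $\mathcal{R}$ an $N$--transitive binary relation on $X$, and $T:X\rightarrow X$ an $\mathcal{R}$--contractive mapping of Meir--Keeler type. Assume: (D1) $T$ is $\mathcal{R}$--preserving; (D2) there exists $x_{0}\in X$ with $x_{0}\mathcal{R}Tx_{0}$. If either (D3) $T$ is continuous, or (D4) $(X,d)$ is $(T,\mathcal{R})$--regular, then $T$ has a fixed point $x^{\ast}\in X$. If additionally (D5) $X$ is $\mathcal{R}$--connected, then $x^{\ast}$ is the unique fixed point of $T$ and $T^{n}x\rightarrow x^{\ast}$ as $n\rightarrow\infty$ for every $x\in X$.
   Context: $\mathbb{N}$ is the set of non-negative integers; $T^n$ is the $n$-th iterate. $T$ is $\mathcal{R}$--contractive of Meir--Keeler type if for every $\varepsilon>0$ there exists $\delta(\varepsilon)>0$ such that for all $x,y\in X$ with $x\mathcal{R}y$ and $\varepsilon\leq d(x,y)<\varepsilon+\delta(\varepsilon)$ one has $d(Tx,Ty)<\varepsilon$. $T$ is $\mathcal{R}$--preserving if $x\mathcal{R}y$ implies $Tx\mathcal{R}Ty$. $\mathcal{R}$ is $N$--transitive if for all $x_0,\dots,x_{N+1}\in X$ with $x_i\mathcal{R}x_{i+1}$ for all $i\in\{0,\dots,N\}$ one has $x_0\mathcal{R}x_{N+1}$. A sequence $\{x_n\}$ is $(T,\mathcal{R})$--orbital if $x_n=T^nx_0$ and $x_n\mathcal{R}x_{n+1}$ for all $n$. $(X,d)$ is $(T,\mathcal{R})$--regular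 if for every $(T,\mathcal{R})$--orbital sequence $\{x_n\}$ with $x_n\rightarrow x\in X$ there is a subsequence $\{x_{n(k)}\}$ with $x_{n(k)}\mathcal{R}x$ for all $k$. An $\mathcal{R}$--chain from $x$ to $y$ is $(z_0,\dots,z_n)$ with $z_0=x$, $z_n=y$ and $z_{i-1}\mathcal{R}z_i$ or $z_i\mathcal{R}z_{i-1}$ for each $i\in\{1,\dots,n\}$; $X$ is $\mathcal{R}$--connected if for all $x\neq y$ there is an $\mathcal{R}$--chain from $x$ to $y$. *)

theory Defs
  imports "HOL-Analysis.Analysis"
begin

definition N_transitive :: "nat \<Rightarrow> ('a \<Rightarrow> 'a \<Rightarrow> bool) \<Rightarrow> bool" where
  "N_transitive N R \<longleftrightarrow>
     (\<forall>x :: nat \<Rightarrow> 'a. (\<forall>i\<le>N. R (x i) (x (Suc i))) \<longrightarrow> R (x 0) (x (Suc N)))"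

definition R_contractive_MK :: "('a::metric_space \<Rightarrow> 'a \<Rightarrow> bool) \<Rightarrow> ('a \<Rightarrow> 'a) \<Rightarrow> bool" where
  "R_contractive_MK R T \<longleftrightarrow>
     (\<forall>\<epsilon>>0. \<exists>\<delta>>0. \<forall>x y. R x y \<and> \<epsilon> \<le> dist x y \<and> dist x y < \<epsilon> + \<delta>
         \<longrightarrow> dist (T x) (T y) < \<epsilon>)"

definition R_preserving :: "('a \<Rightarrow> 'a \<Rightarrow> bool) \<Rightarrow> ('a \<Rightarrow> 'a) \<Rightarrow> bool" where
  "R_preserving R T \<longleftrightarrow> (\<forall>x y. R x y \<longrightarrow> R (T x) (T y))"

definition orbital :: "('a \<Rightarrow> 'a \<Rightarrow> bool) \<Rightarrow> ('a \<Rightarrow> 'a) \<Rightarrow> (nat \<Rightarrow> 'a) \<Rightarrow> bool" where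
  "orbital R T x \<longleftrightarrow> (\<forall>n. x n = (T ^^ n) (x 0) \<and> R (x n) (x (Suc n)))"

definition TR_regular :: "('a::metric_space \<Rightarrow> 'a \<Rightarrow> bool) \<Rightarrow> ('a \<Rightarrow> 'a) \<Rightarrow> bool" where
  "TR_regular R T \<longleftrightarrow>
     (\<forall>x l. orbital R T x \<and> (x \<longlonglongrightarrow> l) \<longrightarrow>
        (\<exists>r :: nat \<Rightarrow> nat. strict_mono r \<and> (\<forall>k. R (x (r k)) l)))"

definition R_chain :: "('a \<Rightarrow> 'a \<Rightarrow> bool) \<Rightarrow> 'a \<Rightarrow> 'a \<Rightarrow> bool" where
  "R_chain R x y \<longleftrightarrow>
     (\<exists>(z :: nat \<Rightarrow> 'a) n. z 0 = x \<and> z n = y \<and>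
        (\<forall>i\<in>{1..n}. R (z (i - 1)) (z i) \<or> R (z i) (z (i - 1))))"

definition R_connected :: "('a \<Rightarrow> 'a \<Rightarrow> bool) \<Rightarrow> bool" where
  "R_connected R \<longleftrightarrow> (\<forall>x y. x \<noteq> y \<longrightarrow> R_chain R x y)"

end

theory Submission
  imports Defs
begin

lemma mk_le:
  assumes "R_contractive_MK R T" "R u v"
  shows "dist (T u) (T v) \<le> dist u v"
proof (cases "u = v")
  case False
  then have "dist u v > 0" by simp
  then obtain d where "d > 0" "\<forall>x y. R x y \<and> dist u v \<le> dist x y \<and> dist x y < dist u v + d
         \<longrightarrow> dist (T x) (T y) < dist u v"
    using assms(1) unfolding R_contractive_MK_def by blast
  then show ?thesis using assms(2) by force
qed simp

lemma pres_pow: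
  assumes "R_preserving R T" "R u v"
  shows "R ((T^^n) u) ((T^^n) v)"
  using assms by (induction n) (auto simp: R_preserving_def)

lemma to0:
  assumes mk: "R_contractive_MK R T" and pr: "R_preserving R T" and uv: "R u v"
  shows "(\<lambda>n. dist ((T^^n) u) ((T^^n) v)) \<longlonglongrightarrow> 0"
proof -
  define a where "a n = dist ((T^^n) u) ((T^^n) v)" for n
  have dec: "decseq a"
    unfolding decseq_Suc_iff a_def using mk_le[OF mk pres_pow[OF pr uv]] by simp
  have bdd: "bdd_below (range a)" unfolding a_def by (intro bdd_belowI[of _ 0]) auto
  define L where "L = (INF i. a i)"
  have lim: "a \<longlonglongrightarrow> L" unfolding L_def by (rule LIMSEQ_decseq_INF[OF bdd dec])
  have low: "L \<le> a n" for n unfolding L_def by (rule cINF_lower[OF bdd]) simp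
  have L0: "L \<ge> 0" unfolding L_def a_def by (rule cINF_greatest) auto
  have "L = 0"
  proof (rule ccontr)
    assume "L \<noteq> 0"
    with L0 have Lp: "L > 0" by simp
    then obtain d where dp: "d > 0" and dd: "\<forall>x y. R x y \<and> L \<le> dist x y \<and> dist x y < L + d
         \<longrightarrow> dist (T x) (T y) < L"
      using mk unfolding R_contractive_MK_def by blast
    have "eventually (\<lambda>n. a n < L + d) sequentially"
      using lim dp by (intro order_tendstoD(2)) auto
    then obtain n where "a n < L + d" by (auto simp: eventually_sequentially)
    then have "dist (T ((T^^n) u)) (T ((T^^n) v)) < L"
      using dd pres_pow[OF pr uv, of n] low[of n] unfolding a_def by blast
    then have "a (Suc n) < L" unfolding a_def by simp
    with low[of "Suc n"] show False by simp
  qed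
  with lim show ?thesis unfolding a_def by simp
qed

theorem corollary5:
  fixes T :: "'a::complete_space \<Rightarrow> 'a" and R :: "'a \<Rightarrow> 'a \<Rightarrow> bool" and N :: nat
  assumes "N > 0"
    and "N_transitive N R"
    and "R_contractive_MK R T"
    and D1: "R_preserving R T"
    and D2: "\<exists>x0. R x0 (T x0)"
    and D34: "continuous_on UNIV T \<or> TR_regular R T"
  shows "\<exists>xs. T xs = xs \<and>
           (R_connected R \<longrightarrow>
              (\<forall>y. T y = y \<longrightarrow> y = xs) \<and> (\<forall>x. ((\<lambda>n. (T ^^ n) x) \<longlonglongrightarrow> xs)))"
proof -
  note Npos = assms(1) and Ntr = assms(2) and mk = assms(3)
  obtain x0 where x0: "R x0 (T x0)" using D2 by blast
  define x where "x n = (T^^n) x0" for n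
  have xS: "x (Suc n) = T (x n)" for n unfolding x_def by simp
  have Rrel: "R (x n) (x (Suc n))" for n
    unfolding x_def using pres_pow[OF D1 x0, of n] by (simp add: funpow_swap1)
  have Rfar: "R (x m) (x (m + 1 + k * N))" for k m
  proof (induction k)
    case 0 then show ?case using Rrel[of m] by simp
  next
    case (Suc k)
    define z where "z i = (if i = 0 then x m else x (m + k * N + i))" for i
    have "\<forall>i\<le>N. R (z i) (z (Suc i))"
    proof (intro allI impI)
      fix i assume "i \<le> N"
      show "R (z i) (z (Suc i))"
      proof (cases "i = 0")
        case True then show ?thesis using Suc by (simp add: z_def)
      next
        case False then show ?thesis using Rrel[of "m + k * N + i"] by (simp add: z_def)
      qed
    qed
    then have "R (z 0) (z (Suc N))" using Ntr unfolding N_transitive_def by blast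
    then show ?case by (simp add: z_def algebra_simps)
  qed
  define a where "a n = dist (x n) (x (Suc n))" for n
  have alim: "a \<longlonglongrightarrow> 0"
    using to0[OF mk D1 x0] unfolding a_def x_def by (simp add: funpow_swap1)
  have cauchy: "Cauchy x"
  proof (rule CauchyI')
    fix e :: real assume ep: "0 < e"
    define \<epsilon> where "\<epsilon> = e / 2"
    have \<epsilon>p: "\<epsilon> > 0" using ep by (simp add: \<epsilon>_def)
    then obtain d where dp: "d > 0" and dd: "\<forall>x y. R x y \<and> \<epsilon> \<le> dist x y \<and> dist x y < \<epsilon> + d
         \<longrightarrow> dist (T x) (T y) < \<epsilon>"
      using mk unfolding R_contractive_MK_def by blast
    define d' where "d' = min d \<epsilon>"
    have d'p: "d' > 0" using dp \<epsilon>p by (simp add: d'_def)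
    define \<eta> where "\<eta> = d' / (real N + 1)"
    have \<eta>p: "\<eta> > 0" using d'p by (simp add: \<eta>_def)
    have N\<eta>: "real N * \<eta> < d'"
    proof -
      have "real N * \<eta> = d' * (real N / (real N + 1))" by (simp add: \<eta>_def)
      also have "\<dots> < d' * 1" using d'p by (intro mult_strict_left_mono) auto
      finally show ?thesis by simp
    qed
    obtain n0 where n0': "\<forall>n\<ge>n0. dist (a n) 0 < \<eta>"
      using alim \<eta>p unfolding LIMSEQ_def by blast
    have n0: "\<forall>n\<ge>n0. a n < \<eta>"
    proof (intro allI impI)
      fix n assume "n \<ge> n0"
      then have "dist (a n) 0 < \<eta>" using n0' by blast
      then show "a n < \<eta>" by (simp add: dist_real_def)
    qed
    have tri: "dist (x m) (x (m + j)) \<le> real j * \<eta>" if "m \<ge> n0" for m j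
    proof (induction j)
      case 0 then show ?case by simp
    next
      case (Suc j)
      have "dist (x m) (x (m + Suc j)) \<le> dist (x m) (x (m + j)) + dist (x (m + j)) (x (Suc (m + j)))"
        using dist_triangle by simp
      also have "\<dots> \<le> real j * \<eta> + \<eta>" using Suc n0 that unfolding a_def
        by (intro add_mono) (auto intro: less_imp_le)
      finally show ?case by (simp add: algebra_simps)
    qed
    have B: "dist (x (m + 1)) (x (m + 2 + k * N)) < \<epsilon>" if "m \<ge> n0" for m k
      using that
    proof (induction k arbitrary: m)
      have stepB: "dist (x (m + 1)) (x (m + 2 + k * N)) < \<epsilon>"
        if A: "dist (x m) (x (m + 1 + k * N)) < \<epsilon> + d'" for m k
      proof -
        have e1: "x (m + 1) = T (x m)" and e2: "x (m + 2 + k * N) = T (x (m + 1 + k * N))"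
          using xS by (simp_all add: numeral_2_eq_2)
        show ?thesis
        proof (cases "\<epsilon> \<le> dist (x m) (x (m + 1 + k * N))")
          case True
          have "dist (x m) (x (m + 1 + k * N)) < \<epsilon> + d" using A by (simp add: d'_def)
          then show ?thesis unfolding e1 e2 using dd Rfar[of m k] True by blast
        next
          case False
          then show ?thesis unfolding e1 e2 using mk_le[OF mk Rfar[of m k]] by simp
        qed
      qed
      {
        case 0
        have "\<eta> * (real N + 1) = d'" unfolding \<eta>_def by simp
        moreover have "\<eta> * real N \<ge> 0" using \<eta>p by simp
        ultimately have "\<eta> \<le> d'" by (simp add: algebra_simps)
        moreover have "a m < \<eta>" using n0 0 by simp
        ultimately have "dist (x m) (x (m + 1 + 0 * N)) < \<epsilon> + d'"
          using \<epsilon>p unfolding a_def by simp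
        then show ?case using stepB[of m 0] by simp
      next
        case (Suc k)
        have idx: "m + 1 + Suc k * N = (m + 2 + k * N) + (N - 1)" using Npos by simp
        have t0: "dist (x (m + 2 + k * N)) (x ((m + 2 + k * N) + (N - 1))) \<le> real (N - 1) * \<eta>"
          using tri[of "m + 2 + k * N" "N - 1"] Suc.prems by linarith
        have t3: "dist (x (m + 2 + k * N)) (x (m + 1 + Suc k * N)) \<le> real (N - 1) * \<eta>"
          unfolding idx by (rule t0)
        have "dist (x m) (x (m + 1 + Suc k * N)) \<le> a m + (dist (x (m + 1)) (x (m + 2 + k * N)) + real (N - 1) * \<eta>)"
          using dist_triangle[of "x m" "x (m + 1 + Suc k * N)" "x (m + 1)"]
            dist_triangle[of "x (m + 1)" "x (m + 1 + Suc k * N)" "x (m + 2 + k * N)"] t3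
          unfolding a_def by simp
        moreover have "a m < \<eta>" using n0 Suc.prems by simp
        moreover have "dist (x (m + 1)) (x (m + 2 + k * N)) < \<epsilon>" using Suc by simp
        moreover have "real (N - 1) * \<eta> + \<eta> = real N * \<eta>" using Npos by (simp add: of_nat_diff algebra_simps)
        ultimately have "dist (x m) (x (m + 1 + Suc k * N)) < \<epsilon> + d'" using N\<eta> by linarith
        then show ?case using stepB[of m "Suc k"] by simp
      }
    qed
    show "\<exists>M. \<forall>m\<ge>M. \<forall>n>m. dist (x m) (x n) < e"
    proof (intro exI[of _ "Suc n0"] allI impI)
      fix m n assume mM: "Suc n0 \<le> m" and mn: "m < n"
      obtain m' where m': "m = m' + 1" "m' \<ge> n0" using mM by (metis Suc_eq_plus1 Suc_le_D Suc_le_mono)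
      define k where "k = (n - m - 1) div N"
      define r where "r = (n - m - 1) mod N"
      have "k * N + r = n - m - 1" unfolding k_def r_def by (rule div_mult_mod_eq)
      then have nk: "n = (m' + 2 + k * N) + r" using mn m'(1) by arith
      have rN: "r < N" using Npos unfolding r_def by simp
      have "dist (x m) (x n) \<le> dist (x (m' + 1)) (x (m' + 2 + k * N)) + dist (x (m' + 2 + k * N)) (x n)"
        using dist_triangle m'(1) by simp
      also have "dist (x (m' + 2 + k * N)) (x n) \<le> real r * \<eta>"
        unfolding nk using tri[of "m' + 2 + k * N" r] m'(2) by simp
      finally have "dist (x m) (x n) < \<epsilon> + real r * \<eta>" using B[OF m'(2), of k] by linarith
      moreover have "real r * \<eta> \<le> real N * \<eta>" using rN \<eta>p by (intro mult_right_mono) auto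
      moreover have "d' \<le> \<epsilon>" by (simp add: d'_def)
      ultimately show "dist (x m) (x n) < e" using N\<eta> unfolding \<epsilon>_def by linarith
    qed
  qed
  then obtain xs where xlim: "x \<longlonglongrightarrow> xs" using Cauchy_convergent convergent_def by blast
  have xSlim: "(\<lambda>n. x (Suc n)) \<longlonglongrightarrow> xs" using LIMSEQ_Suc[OF xlim] .
  have Tfix: "T xs = xs"
    using D34
  proof
    assume c: "continuous_on UNIV T"
    have "(\<lambda>n. T (x n)) \<longlonglongrightarrow> T xs"
      by (rule continuous_on_tendsto_compose[OF c xlim]) auto
    moreover have "(\<lambda>n. T (x n)) = (\<lambda>n. x (Suc n))" by (simp add: xS)
    ultimately show ?thesis using xSlim LIMSEQ_unique by metis
  next
    assume reg: "TR_regular R T"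
    have orb: "orbital R T x" unfolding orbital_def using Rrel by (simp add: x_def)
    have "\<exists>r::nat\<Rightarrow>nat. strict_mono r \<and> (\<forall>k. R (x (r k)) xs)"
      by (rule reg[unfolded TR_regular_def, rule_format, of x xs, OF conjI[OF orb xlim]])
    then obtain r :: "nat \<Rightarrow> nat" where r: "strict_mono r" "\<forall>k. R (x (r k)) xs" by blast
    have l1: "(\<lambda>k. x (r k)) \<longlonglongrightarrow> xs" using LIMSEQ_subseq_LIMSEQ[OF xlim r(1)] by (simp add: comp_def)
    have l2: "(\<lambda>k. x (Suc (r k))) \<longlonglongrightarrow> xs" using LIMSEQ_subseq_LIMSEQ[OF xSlim r(1)] by (simp add: comp_def)
    have "(\<lambda>k. dist (x (Suc (r k))) (T xs)) \<longlonglongrightarrow> 0"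
    proof (rule Lim_null_comparison)
      show "\<forall>\<^sub>F k in sequentially. norm (dist (x (Suc (r k))) (T xs)) \<le> dist (x (r k)) xs"
      proof (rule always_eventually, rule allI)
        fix k
        have "dist (T (x (r k))) (T xs) \<le> dist (x (r k)) xs"
          using r(2) by (intro mk_le[OF mk]) blast
        then show "norm (dist (x (Suc (r k))) (T xs)) \<le> dist (x (r k)) xs"
          using xS[of "r k"] by simp
      qed
      show "(\<lambda>k. dist (x (r k)) xs) \<longlonglongrightarrow> 0" by (rule iffD1[OF tendsto_dist_iff l1])
    qed
    then have "(\<lambda>k. x (Suc (r k))) \<longlonglongrightarrow> T xs" by (rule iffD2[OF tendsto_dist_iff])
    then show ?thesis using l2 by (rule LIMSEQ_unique)
  qed
  have fixpow: "(T^^n) xs = xs" for n using Tfix by (induction n) auto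
  show ?thesis
  proof (intro exI[of _ xs] conjI impI)
    show "T xs = xs" by (rule Tfix)
    assume conn: "R_connected R"
    have conv: "(\<lambda>n. (T ^^ n) y) \<longlonglongrightarrow> xs" for y
    proof (cases "y = xs")
      case True then show ?thesis using fixpow by simp
    next
      case False
      then obtain z :: "nat \<Rightarrow> 'a" and n :: nat where z: "z 0 = y" "z n = xs"
        "\<forall>i\<in>{1..n}. R (z (i - 1)) (z i) \<or> R (z i) (z (i - 1))"
        using conn False unfolding R_connected_def R_chain_def by blast
      have bnd: "dist ((T^^k) (z 0)) ((T^^k) (z j)) \<le> (\<Sum>i<j. dist ((T^^k) (z i)) ((T^^k) (z (Suc i))))" for k j
      proof (induction j)
        case (Suc j)
        then show ?case using dist_triangle[of "(T^^k) (z 0)" "(T^^k) (z (Suc j))" "(T^^k) (z j)"]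
          by simp
      qed simp
      have terms: "(\<lambda>k. dist ((T^^k) (z i)) ((T^^k) (z (Suc i)))) \<longlonglongrightarrow> 0" if "i \<in> {..<n}" for i
      proof -
        have "Suc i \<in> {1..n}" using that by simp
        then have "R (z i) (z (Suc i)) \<or> R (z (Suc i)) (z i)" using z(3) by fastforce
        then show ?thesis
        proof
          assume "R (z i) (z (Suc i))"
          then show ?thesis by (rule to0[OF mk D1])
        next
          assume "R (z (Suc i)) (z i)"
          from to0[OF mk D1 this] show ?thesis by (simp add: dist_commute)
        qed
      qed
      have "(\<lambda>k. \<Sum>i<n. dist ((T^^k) (z i)) ((T^^k) (z (Suc i)))) \<longlonglongrightarrow> 0"
        by (rule tendsto_null_sum) (rule terms)
      moreover have ev: "\<forall>k. norm (dist ((T^^k) y) xs) \<le> (\<Sum>i<n. dist ((T^^k) (z i)) ((T^^k) (z (Suc i))))"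
      proof
        fix k
        have "dist ((T^^k) (z 0)) ((T^^k) (z n)) \<le> (\<Sum>i<n. dist ((T^^k) (z i)) ((T^^k) (z (Suc i))))"
          by (rule bnd)
        then show "norm (dist ((T^^k) y) xs) \<le> (\<Sum>i<n. dist ((T^^k) (z i)) ((T^^k) (z (Suc i))))"
          using z(1,2) fixpow[of k] by simp
      qed
      ultimately have "(\<lambda>k. dist ((T^^k) y) xs) \<longlonglongrightarrow> 0"
        by (intro Lim_null_comparison[OF always_eventually[OF ev]])
      then show ?thesis by (rule iffD2[OF tendsto_dist_iff])
    qed
    then show "\<forall>x. (\<lambda>n. (T ^^ n) x) \<longlonglongrightarrow> xs" by blast
    show "\<forall>y. T y = y \<longrightarrow> y = xs"
    proof (intro allI impI)
      fix y assume "T y = y"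
      then have "(T^^n) y = y" for n by (induction n) auto
      then have "(\<lambda>n. y) \<longlonglongrightarrow> xs" using conv[of y] by simp
      then show "y = xs" by (rule LIMSEQ_unique[OF tendsto_const])
    qed
  qed
qed

end
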